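(* Let $K$ be a compact line and let $G:K\to\mathbb{R}$ be an amenable function. Then $\lim_{y\searrow 0_K}L_G(y)=G(0_K)$.
   Context: A compact line is a compact space $K$ whose topology is the order topology of a linear order on $K$; $0_K$ and $1_K$ denote its minimum and maximum, and $0_K<1_K$. A point $x\in(0_K,1_K]$ is left-isolated if it has an immediate predecessor $x^-$ and left-dense otherwise; $x\in[0_K,1_K)$ is right-dense if it has no immediate successor. $G$ is regulated if for every left-dense $x$ the limit $\lim_{y\nearrow x}G(y)$ exists and for every right-dense $x$, $\lim_{y\searrow x}G(y)=G(x)$; $G$ is amenable if it is regulated and right-continuous. For regulated $G$, $L_G(0_K)=0$, $L_G(x)=\lim_{y\nearrow x}G(y)$ if $x\in(0_K,1_K]$ is left-dense, and $L_G(x)=G(x^-)$ if $x$ is left-isolated. The limit $y\searrow 0_K$ is along $y>0_K$ decreasing to $0_K$. *)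

theory Defs
  imports "HOL-Analysis.Analysis"
begin

text \<open>A compact line is modelled as a type of class linorder_topology (order topology
  of a linear order) whose universe is compact, with at least two points.\<close>

definition zeroK :: "'a::linorder" where
  "zeroK = (THE x. \<forall>y. x \<le> y)"

definition oneK :: "'a::linorder" where
  "oneK = (THE x. \<forall>y. y \<le> x)"

definition left_isolated :: "'a::linorder \<Rightarrow> bool" where
  "left_isolated x \<longleftrightarrow> (\<exists>p. p < x \<and> (\<forall>z. \<not> (p < z \<and> z < x)))"

definition pred_pt :: "'a::linorder \<Rightarrow> 'a" where
  "pred_pt x = (THE p. p < x \<and> (\<forall>z. \<not> (p < z \<and> z < x)))"

definition right_dense :: "'a::linorder \<Rightarrow> bool" where
  "right_dense x \<longleftrightarrow> x \<noteq> oneK \<and> \<not> (\<exists>s. x < s \<and> (\<forall>z. \<not> (x < z \<and> z < s)))"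

definition regulated :: "('a::linorder_topology \<Rightarrow> real) \<Rightarrow> bool" where
  "regulated G \<longleftrightarrow>
     (\<forall>x. x \<noteq> zeroK \<and> \<not> left_isolated x \<longrightarrow> (\<exists>l. (G \<longlongrightarrow> l) (at_left x))) \<and>
     (\<forall>x. right_dense x \<longrightarrow> (G \<longlongrightarrow> G x) (at_right x))"

definition right_continuous :: "('a::linorder_topology \<Rightarrow> real) \<Rightarrow> bool" where
  "right_continuous G \<longleftrightarrow> (\<forall>x. continuous (at x within {x..}) G)"

definition amenable :: "('a::linorder_topology \<Rightarrow> real) \<Rightarrow> bool" where
  "amenable G \<longleftrightarrow> regulated G \<and> right_continuous G"

definition LG :: "('a::linorder_topology \<Rightarrow> real) \<Rightarrow> 'a \<Rightarrow> real" where
  "LG G x = (if x = zeroK then 0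
             else if left_isolated x then G (pred_pt x)
             else Lim (at_left x) G)"

end

theory Submission
  imports Defs
begin

lemma zeroK_prop:
  assumes "compact (UNIV :: 'a::linorder_topology set)"
  shows "\<forall>y. (zeroK::'a) \<le> y"
proof -
  obtain s :: 'a where s: "\<forall>t. s \<le> t"
    using compact_attains_inf[OF assms] by auto
  have "zeroK = s" unfolding zeroK_def
    by (rule the_equality) (use s in \<open>auto intro: order.antisym\<close>)
  thus ?thesis using s by simp
qed

lemma pred_pt_prop:
  assumes "left_isolated (y::'a::linorder)"
  shows "pred_pt y < y \<and> (\<forall>z. \<not> (pred_pt y < z \<and> z < y))"
proof -
  obtain p where p: "p < y" "\<forall>z. \<not> (p < z \<and> z < y)"
    using assms unfolding left_isolated_def by auto
  have "pred_pt y = p" unfolding pred_pt_def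
    by (rule the_equality) (use p in \<open>auto, metis not_less_iff_gr_or_eq\<close>)
  thus ?thesis using p by simp
qed

theorem lemma5p3:
  fixes G :: "'a::linorder_topology \<Rightarrow> real"
  assumes "compact (UNIV :: 'a set)"
    and "(zeroK :: 'a) < oneK"
    and "amenable G"
  shows "(LG G \<longlongrightarrow> G zeroK) (at_right zeroK)"
proof (rule tendstoI)
  fix e :: real assume e: "e > 0"
  define z :: 'a where "z = zeroK"
  have zmin: "\<And>y. z \<le> y" using zeroK_prop[OF assms(1)] z_def by auto
  have zo: "z < oneK" using assms(2) z_def by simp
  have reg: "regulated G" using assms(3) amenable_def by auto
  have key: "\<exists>b>z. \<forall>y>z. y < b \<longrightarrow> dist (LG G y) (G z) < e"
  proof (cases "\<exists>s>z. \<forall>w. \<not> (z < w \<and> w < s)")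
    case True
    then show ?thesis by auto
  next
    case False
    hence rd: "right_dense z" unfolding right_dense_def using zo by auto
    hence "(G \<longlongrightarrow> G z) (at_right z)" using reg unfolding regulated_def by auto
    hence "eventually (\<lambda>w. dist (G w) (G z) < e/2) (at_right z)"
      using e by (intro tendstoD) auto
    then obtain b where b: "b > z" "\<And>w. w > z \<Longrightarrow> w < b \<Longrightarrow> dist (G w) (G z) < e/2"
      using eventually_at_right[OF zo] by auto
    have "\<forall>y>z. y < b \<longrightarrow> dist (LG G y) (G z) < e"
    proof (intro allI impI)
      fix y assume y: "z < y" "y < b"
      have ynz: "y \<noteq> zeroK" using y z_def by auto
      show "dist (LG G y) (G z) < e"
      proof (cases "left_isolated y")
        case True
        have pp: "pred_pt y < y" using pred_pt_prop[OF True] by auto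
        have "dist (G (pred_pt y)) (G z) < e"
        proof (cases "pred_pt y = z")
          case True thus ?thesis using e by simp
        next
          case False
          hence "z < pred_pt y" using zmin[of "pred_pt y"] by auto
          moreover have "pred_pt y < b" using pp y(2) by (rule less_trans)
          ultimately show ?thesis using b(2)[of "pred_pt y"] e by fastforce
        qed
        thus ?thesis unfolding LG_def using ynz True by simp
      next
        case nli: False
        obtain l where l: "(G \<longlongrightarrow> l) (at_left y)"
          using reg ynz nli unfolding regulated_def by blast
        have nt: "\<not> trivial_limit (at_left y)"
        proof
          assume "trivial_limit (at_left y)"
          hence "eventually (\<lambda>_. False) (at_left y)" by (simp add: trivial_limit_def)
          then obtain c where "c < y" "\<forall>w>c. w < y \<longrightarrow> False"
            using eventually_at_left[OF y(1)] by auto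
          thus False using nli unfolding left_isolated_def by auto
        qed
        have Lim: "Lim (at_left y) G = l" using tendsto_Lim[OF nt l] .
        have ev: "eventually (\<lambda>w. dist (G w) (G z) \<le> e/2) (at_left y)"
          unfolding eventually_at_left[OF y(1)]
          using y b by (intro exI[of _ z]) (auto intro: less_imp_le)
        have "((\<lambda>w. dist (G w) (G z)) \<longlongrightarrow> dist l (G z)) (at_left y)"
          by (intro tendsto_intros l)
        hence "dist l (G z) \<le> e/2"
          using tendsto_upperbound ev nt by blast
        thus ?thesis unfolding LG_def using ynz nli Lim e by simp
      qed
    qed
    thus ?thesis using b(1) by auto
  qed
  then show "eventually (\<lambda>y. dist (LG G y) (G zeroK) < e) (at_right zeroK)"
    unfolding z_def[symmetric] eventually_at_right[OF zo] .
qed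

end
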